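(* Suppose that for every $n\in\omega$, $\mathbb{P}_n$ is a pre-Pawlikowski lattice such that $\mathsf{S}_{\mathrm{fin}}(\mathbb{V}_{1_{\mathbb{P}_n}},\mathbb{V}_{1_{\mathbb{P}_n}})$ holds. Then $\mathbb{P}:=\prod_{n\in\omega}\mathbb{P}_n$, endowed with the pointwise ordering, is a pre-Pawlikowski lattice satisfying $\mathsf{S}_{\mathrm{fin}}(\mathbb{V}_{1_{\mathbb{P}}},\mathbb{V}_{1_{\mathbb{P}}})$, where $1_{\mathbb{P}}:=(1_{\mathbb{P}_n})_{n\in\omega}$.
   Context: A lattice is a poset where any two elements have a supremum and an infimum; it is bounded if it has a minimum $0$ and maximum $1$. A prime element of a bounded lattice is $q\neq 1$ such that $a\wedge b\leq q$ implies $a\leq q$ or $b\leq q$. The lattice has enough prime elements if whenever $a\not\leq b$ there is a prime $q$ with $b\leq q$ and $a\not\leq q$. A pre-Pawlikowski lattice is a bounded lattice with enough prime elements. For $p$ in a lattice $\mathbb{Q}$, $\mathbb{V}_p$ is the family of subsets $A\subseteq\mathbb{Q}$ with $\sup A=p$. $\mathsf{S}_{\mathrm{fin}}(\mathbb{V}_p,\mathbb{V}_p)$ means: for every sequence $(A_n)_{n\in\omega}$ of members of $\mathbb{V}_p$ there are finite $F_n\subseteq A_n$ with $\sup\bigcup_{n}F_n=p$. *)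

theory Defs
  imports Main
begin

definition partial_order_on :: "'a set \<Rightarrow> ('a \<Rightarrow> 'a \<Rightarrow> bool) \<Rightarrow> bool" where
  "partial_order_on C le \<longleftrightarrow>
     (\<forall>x\<in>C. le x x) \<and>
     (\<forall>x\<in>C. \<forall>y\<in>C. le x y \<and> le y x \<longrightarrow> x = y) \<and>
     (\<forall>x\<in>C. \<forall>y\<in>C. \<forall>z\<in>C. le x y \<and> le y z \<longrightarrow> le x z)"

definition is_sup :: "'a set \<Rightarrow> ('a \<Rightarrow> 'a \<Rightarrow> bool) \<Rightarrow> 'a set \<Rightarrow> 'a \<Rightarrow> bool" where
  "is_sup C le A s \<longleftrightarrow> s \<in> C \<and> (\<forall>a\<in>A. le a s) \<and>
     (\<forall>u\<in>C. (\<forall>a\<in>A. le a u) \<longrightarrow> le s u)"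

definition is_inf :: "'a set \<Rightarrow> ('a \<Rightarrow> 'a \<Rightarrow> bool) \<Rightarrow> 'a set \<Rightarrow> 'a \<Rightarrow> bool" where
  "is_inf C le A i \<longleftrightarrow> i \<in> C \<and> (\<forall>a\<in>A. le i a) \<and>
     (\<forall>u\<in>C. (\<forall>a\<in>A. le u a) \<longrightarrow> le u i)"

definition lattice_on :: "'a set \<Rightarrow> ('a \<Rightarrow> 'a \<Rightarrow> bool) \<Rightarrow> bool" where
  "lattice_on C le \<longleftrightarrow> partial_order_on C le \<and>
     (\<forall>x\<in>C. \<forall>y\<in>C. (\<exists>s. is_sup C le {x, y} s) \<and> (\<exists>i. is_inf C le {x, y} i))"

definition bounded_lattice_on :: "'a set \<Rightarrow> ('a \<Rightarrow> 'a \<Rightarrow> bool) \<Rightarrow> bool" where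
  "bounded_lattice_on C le \<longleftrightarrow> lattice_on C le \<and>
     (\<exists>b\<in>C. \<forall>x\<in>C. le b x) \<and> (\<exists>t\<in>C. \<forall>x\<in>C. le x t)"

definition ltop :: "'a set \<Rightarrow> ('a \<Rightarrow> 'a \<Rightarrow> bool) \<Rightarrow> 'a" where
  "ltop C le = (THE t. t \<in> C \<and> (\<forall>x\<in>C. le x t))"

definition lmeet :: "'a set \<Rightarrow> ('a \<Rightarrow> 'a \<Rightarrow> bool) \<Rightarrow> 'a \<Rightarrow> 'a \<Rightarrow> 'a" where
  "lmeet C le a b = (THE i. is_inf C le {a, b} i)"

definition prime_element :: "'a set \<Rightarrow> ('a \<Rightarrow> 'a \<Rightarrow> bool) \<Rightarrow> 'a \<Rightarrow> bool" where
  "prime_element C le q \<longleftrightarrow> q \<in> C \<and> q \<noteq> ltop C le \<and>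
     (\<forall>a\<in>C. \<forall>b\<in>C. le (lmeet C le a b) q \<longrightarrow> le a q \<or> le b q)"

definition enough_primes :: "'a set \<Rightarrow> ('a \<Rightarrow> 'a \<Rightarrow> bool) \<Rightarrow> bool" where
  "enough_primes C le \<longleftrightarrow>
     (\<forall>a\<in>C. \<forall>b\<in>C. \<not> le a b \<longrightarrow> (\<exists>q. prime_element C le q \<and> le b q \<and> \<not> le a q))"

definition pre_Pawlikowski :: "'a set \<Rightarrow> ('a \<Rightarrow> 'a \<Rightarrow> bool) \<Rightarrow> bool" where
  "pre_Pawlikowski C le \<longleftrightarrow> bounded_lattice_on C le \<and> enough_primes C le"

definition V_sets :: "'a set \<Rightarrow> ('a \<Rightarrow> 'a \<Rightarrow> bool) \<Rightarrow> 'a \<Rightarrow> 'a set set" where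
  "V_sets C le p = {A. A \<subseteq> C \<and> is_sup C le A p}"

definition S_fin_V :: "'a set \<Rightarrow> ('a \<Rightarrow> 'a \<Rightarrow> bool) \<Rightarrow> 'a \<Rightarrow> bool" where
  "S_fin_V C le p \<longleftrightarrow>
     (\<forall>A :: nat \<Rightarrow> 'a set. (\<forall>n. A n \<in> V_sets C le p) \<longrightarrow>
        (\<exists>F :: nat \<Rightarrow> 'a set. (\<forall>n. finite (F n) \<and> F n \<subseteq> A n) \<and>
            is_sup C le (\<Union>n. F n) p))"

definition prod_carrier :: "(nat \<Rightarrow> 'a set) \<Rightarrow> (nat \<Rightarrow> 'a) set" where
  "prod_carrier P = {f. \<forall>n. f n \<in> P n}"

definition prod_le :: "(nat \<Rightarrow> 'a \<Rightarrow> 'a \<Rightarrow> bool) \<Rightarrow> (nat \<Rightarrow> 'a) \<Rightarrow> (nat \<Rightarrow> 'a) \<Rightarrow> bool" where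
  "prod_le le f g \<longleftrightarrow> (\<forall>n. le n (f n) (g n))"

end

theory Submission
  imports Defs "HOL-Library.Nat_Bijection"
begin

lemma po_antisym: "partial_order_on C le \<Longrightarrow> x \<in> C \<Longrightarrow> y \<in> C \<Longrightarrow> le x y \<Longrightarrow> le y x \<Longrightarrow> x = y"
  unfolding partial_order_on_def by blast

lemma sup_unique: "partial_order_on C le \<Longrightarrow> is_sup C le A s \<Longrightarrow> is_sup C le A t \<Longrightarrow> s = t"
  unfolding is_sup_def using po_antisym[of C le s t] by blast

lemma inf_unique: "partial_order_on C le \<Longrightarrow> is_inf C le A s \<Longrightarrow> is_inf C le A t \<Longrightarrow> s = t"
  unfolding is_inf_def using po_antisym[of C le s t] by blast

lemma ltop_prop:
  assumes "bounded_lattice_on C le"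
  shows "ltop C le \<in> C \<and> (\<forall>x\<in>C. le x (ltop C le))"
proof -
  from assms obtain t where t: "t \<in> C" "\<forall>x\<in>C. le x t" unfolding bounded_lattice_on_def by blast
  have po: "partial_order_on C le" using assms unfolding bounded_lattice_on_def lattice_on_def by blast
  have "ltop C le = t" unfolding ltop_def
    by (rule the_equality) (use t po_antisym[OF po] in blast)+
  thus ?thesis using t by simp
qed

lemma lmeet_prop:
  assumes "lattice_on C le" "a \<in> C" "b \<in> C"
  shows "is_inf C le {a,b} (lmeet C le a b)"
proof -
  from assms obtain i where i: "is_inf C le {a,b} i" unfolding lattice_on_def by blast
  have po: "partial_order_on C le" using assms unfolding lattice_on_def by blast
  have "lmeet C le a b = i" unfolding lmeet_def
    by (rule the_equality) (use i inf_unique[OF po] in blast)+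
  thus ?thesis using i by simp
qed

lemma prod_po:
  assumes "\<And>n. partial_order_on (P n) (le n)"
  shows "partial_order_on (prod_carrier P) (prod_le le)"
  unfolding partial_order_on_def prod_carrier_def prod_le_def
proof (intro conjI ballI impI)
  fix x y assume "x \<in> {f. \<forall>n. f n \<in> P n}" "y \<in> {f. \<forall>n. f n \<in> P n}"
    "(\<forall>n. le n (x n) (y n)) \<and> (\<forall>n. le n (y n) (x n))"
  then show "x = y" using po_antisym[OF assms] by (intro ext) blast
qed (use assms[unfolded partial_order_on_def] in blast)+

lemma prod_sup2:
  assumes "\<And>n. is_sup (P n) (le n) {a n, b n} (s n)"
  shows "is_sup (prod_carrier P) (prod_le le) {a, b} s"
  using assms unfolding is_sup_def prod_carrier_def prod_le_def by auto

lemma prod_inf2: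
  assumes "\<And>n. is_inf (P n) (le n) {a n, b n} (s n)"
  shows "is_inf (prod_carrier P) (prod_le le) {a, b} s"
  using assms unfolding is_inf_def prod_carrier_def prod_le_def by auto

lemma S_fin_apply:
  fixes B :: "nat \<Rightarrow> 'a set"
  assumes S: "S_fin_V C le p" and B: "\<forall>n. B n \<in> V_sets C le p"
  shows "\<exists>F. (\<forall>n. finite (F n) \<and> F n \<subseteq> B n) \<and> is_sup C le (\<Union>n. F n) p"
proof -
  have "\<forall>A :: nat \<Rightarrow> 'a set. (\<forall>n. A n \<in> V_sets C le p) \<longrightarrow>
        (\<exists>F :: nat \<Rightarrow> 'a set. (\<forall>n. finite (F n) \<and> F n \<subseteq> A n) \<and> is_sup C le (\<Union>n. F n) p)"
    using S unfolding S_fin_V_def .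
  hence "(\<forall>n. B n \<in> V_sets C le p) \<longrightarrow>
        (\<exists>F. (\<forall>n. finite (F n) \<and> F n \<subseteq> B n) \<and> is_sup C le (\<Union>n. F n) p)"
    by (rule spec)
  thus ?thesis using B by (rule mp)
qed

theorem lemma2p1:
  fixes P :: "nat \<Rightarrow> 'a set" and le :: "nat \<Rightarrow> 'a \<Rightarrow> 'a \<Rightarrow> bool"
  assumes "\<And>n. pre_Pawlikowski (P n) (le n)"
    and "\<And>n. S_fin_V (P n) (le n) (ltop (P n) (le n))"
  shows "pre_Pawlikowski (prod_carrier P) (prod_le le) \<and>
         S_fin_V (prod_carrier P) (prod_le le) (\<lambda>n. ltop (P n) (le n))"
proof -
  define C where "C = prod_carrier P"
  define L where "L = prod_le le"
  define T where "T = (\<lambda>n. ltop (P n) (le n))"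
  have bl: "\<And>n. bounded_lattice_on (P n) (le n)" using assms(1) unfolding pre_Pawlikowski_def by blast
  have lat: "\<And>n. lattice_on (P n) (le n)" using bl unfolding bounded_lattice_on_def by blast
  have po: "\<And>n. partial_order_on (P n) (le n)" using lat unfolding lattice_on_def by blast
  have refl: "\<And>n x. x \<in> P n \<Longrightarrow> le n x x" using po unfolding partial_order_on_def by blast
  have ep: "\<And>n. enough_primes (P n) (le n)" using assms(1) unfolding pre_Pawlikowski_def by blast
  have top: "\<And>n. T n \<in> P n \<and> (\<forall>x\<in>P n. le n x (T n))" unfolding T_def using ltop_prop[OF bl] by blast
  have TC: "T \<in> C" unfolding C_def prod_carrier_def using top by blast
  have Ttop: "\<And>f. f \<in> C \<Longrightarrow> L f T" unfolding C_def L_def prod_carrier_def prod_le_def using top by blast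
  have poC: "partial_order_on C L" unfolding C_def L_def by (rule prod_po[OF po])
  have ltopC: "ltop C L = T" unfolding ltop_def
    by (rule the_equality) (use TC Ttop po_antisym[OF poC] in blast)+
  have latC: "lattice_on C L"
    unfolding lattice_on_def
  proof (intro conjI ballI poC)
    fix x y assume "x \<in> C" "y \<in> C"
    hence xy: "\<And>n. x n \<in> P n" "\<And>n. y n \<in> P n" unfolding C_def prod_carrier_def by auto
    have "\<And>n. \<exists>s. is_sup (P n) (le n) {x n, y n} s" using lat xy unfolding lattice_on_def by blast
    hence "\<exists>s. \<forall>n. is_sup (P n) (le n) {x n, y n} (s n)" by (intro choice allI)
    then show "\<exists>s. is_sup C L {x, y} s" unfolding C_def L_def using prod_sup2 by blast
    have "\<And>n. \<exists>s. is_inf (P n) (le n) {x n, y n} s" using lat xy unfolding lattice_on_def by blast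
    hence "\<exists>s. \<forall>n. is_inf (P n) (le n) {x n, y n} (s n)" by (intro choice allI)
    then show "\<exists>s. is_inf C L {x, y} s" unfolding C_def L_def using prod_inf2 by blast
  qed
  have "\<And>n. \<exists>b\<in>P n. \<forall>x\<in>P n. le n b x" using bl unfolding bounded_lattice_on_def by blast
  hence "\<exists>b. \<forall>n. b n \<in> P n \<and> (\<forall>x\<in>P n. le n (b n) x)" by (intro choice allI) blast
  hence "\<exists>b\<in>C. \<forall>x\<in>C. L b x" unfolding C_def L_def prod_carrier_def prod_le_def by auto
  hence blC: "bounded_lattice_on C L" unfolding bounded_lattice_on_def using latC TC Ttop by blast
  have lmeetC: "lmeet C L a b = (\<lambda>n. lmeet (P n) (le n) (a n) (b n))" if "a \<in> C" "b \<in> C" for a b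
  proof -
    have "is_inf C L {a,b} (\<lambda>n. lmeet (P n) (le n) (a n) (b n))"
      unfolding C_def L_def by (rule prod_inf2, rule lmeet_prop[OF lat]) 
        (use that in \<open>auto simp: C_def prod_carrier_def\<close>)
    moreover have "is_inf C L {a,b} (lmeet C L a b)" using lmeet_prop[OF latC that] .
    ultimately show ?thesis using inf_unique[OF poC] by metis
  qed
  have epC: "enough_primes C L"
    unfolding enough_primes_def
  proof (intro ballI impI)
    fix a b assume a: "a \<in> C" and b: "b \<in> C" and nab: "\<not> L a b"
    then obtain n where n: "\<not> le n (a n) (b n)" unfolding L_def prod_le_def by blast
    have an: "\<And>m. a m \<in> P m" "\<And>m. b m \<in> P m" using a b unfolding C_def prod_carrier_def by auto
    obtain q where q: "prime_element (P n) (le n) q" "le n (b n) q" "\<not> le n (a n) q"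
      using ep[of n] an n unfolding enough_primes_def by blast
    define Q where "Q = T(n := q)"
    have qP: "q \<in> P n" "q \<noteq> T n" using q unfolding prime_element_def T_def by auto
    have QC: "Q \<in> C" using qP top unfolding Q_def C_def prod_carrier_def by auto
    have "prime_element C L Q"
      unfolding prime_element_def
    proof (intro conjI ballI impI)
      show "Q \<in> C" by fact
      show "Q \<noteq> ltop C L" using ltopC qP unfolding Q_def by (metis fun_upd_same)
    next
      fix x y assume x: "x \<in> C" and y: "y \<in> C" and m: "L (lmeet C L x y) Q"
      have xn: "\<And>m. x m \<in> P m" "\<And>m. y m \<in> P m" using x y unfolding C_def prod_carrier_def by auto
      have "le n (lmeet (P n) (le n) (x n) (y n)) q"
        using m lmeetC[OF x y] unfolding L_def prod_le_def Q_def by (drule_tac x=n in spec) simp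
      hence "le n (x n) q \<or> le n (y n) q" using q(1) xn unfolding prime_element_def by blast
      moreover have "\<And>m. m \<noteq> n \<Longrightarrow> le m (x m) (Q m) \<and> le m (y m) (Q m)"
        unfolding Q_def using top xn by auto
      ultimately show "L x Q \<or> L y Q" unfolding L_def prod_le_def Q_def
        by (metis fun_upd_same fun_upd_other)
    qed
    moreover have "L b Q" unfolding L_def prod_le_def Q_def using q(2) top an by auto
    moreover have "\<not> L a Q" unfolding L_def prod_le_def Q_def using q(3) by auto
    ultimately show "\<exists>q. prime_element C L q \<and> L b q \<and> \<not> L a q" by blast
  qed
  have sfin: "S_fin_V C L T"
    unfolding S_fin_V_def
  proof (intro allI impI)
    fix A :: "nat \<Rightarrow> (nat \<Rightarrow> 'a) set"
    assume AV: "\<forall>k. A k \<in> V_sets C L T"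
    have AC: "\<And>k. A k \<subseteq> C" using AV unfolding V_sets_def by blast
    have Asup: "\<And>k. is_sup C L (A k) T" using AV unfolding V_sets_def by blast
    have BV: "(\<lambda>f. f n) ` A k \<in> V_sets (P n) (le n) (T n)" for n k
    proof -
      have sub: "(\<lambda>f. f n) ` A k \<subseteq> P n" using AC[of k] unfolding C_def prod_carrier_def by auto
      have "is_sup (P n) (le n) ((\<lambda>f. f n) ` A k) (T n)"
        unfolding is_sup_def
      proof (intro conjI ballI impI)
        show "T n \<in> P n" using top by blast
        fix x assume "x \<in> (\<lambda>f. f n) ` A k" hence "x \<in> P n" using sub by blast
        thus "le n x (T n)" using top by blast
      next
        fix u assume u: "u \<in> P n" and ub: "\<forall>a\<in>(\<lambda>f. f n) ` A k. le n a u"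
        define g where "g = T(n := u)"
        have gC: "g \<in> C" using u top unfolding g_def C_def prod_carrier_def by auto
        have "\<forall>f\<in>A k. L f g"
        proof
          fix f assume f: "f \<in> A k"
          hence "f \<in> C" using AC by blast
          hence "\<And>m. f m \<in> P m" unfolding C_def prod_carrier_def by simp
          hence fP: "\<And>m. f m \<in> P m" .
          have fn: "le n (f n) u" using ub f by blast
          show "L f g" unfolding L_def prod_le_def
          proof
            fix m show "le m (f m) (g m)"
            proof (cases "m = n")
              case True thus ?thesis using fn unfolding g_def by simp
            next
              case False thus ?thesis using top fP unfolding g_def by simp
            qed
          qed
        qed
        hence "L T g" using Asup[of k] gC unfolding is_sup_def by blast
        hence "le n (T n) (g n)" unfolding L_def prod_le_def by blast
        thus "le n (T n) u" unfolding g_def by simp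
      qed
      thus ?thesis using sub unfolding V_sets_def by blast
    qed
    have "\<exists>G. (\<forall>m. finite (G m) \<and> G m \<subseteq> (\<lambda>f. f n) ` A (prod_encode (n, m))) \<and>
            is_sup (P n) (le n) (\<Union>m. G m) (T n)" for n
    proof -
      have Tn: "ltop (P n) (le n) = T n" unfolding T_def by simp
      have S: "S_fin_V (P n) (le n) (T n)" using assms(2)[of n] unfolding Tn .
      have "\<forall>m. (\<lambda>f. f n) ` A (prod_encode (n, m)) \<in> V_sets (P n) (le n) (T n)" using BV by blast
      hence "\<exists>G. (\<forall>m. finite (G m) \<and> G m \<subseteq> (\<lambda>f. f n) ` A (prod_encode (n, m))) \<and>
            is_sup (P n) (le n) (\<Union>m. G m) (T n)" by (rule S_fin_apply[OF S])
      thus ?thesis .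
    qed
    hence "\<exists>G. \<forall>n. (\<forall>m. finite (G n m) \<and> G n m \<subseteq> (\<lambda>f. f n) ` A (prod_encode (n, m))) \<and>
            is_sup (P n) (le n) (\<Union>m. G n m) (T n)" by (intro choice allI)
    then obtain G where G: "\<And>n m. finite (G n m)" "\<And>n m. G n m \<subseteq> (\<lambda>f. f n) ` A (prod_encode (n, m))"
      "\<And>n. is_sup (P n) (le n) (\<Union>m. G n m) (T n)" by blast
    define pick where "pick = (\<lambda>n m g. SOME f. f \<in> A (prod_encode (n, m)) \<and> f n = g)"
    have pick: "pick n m g \<in> A (prod_encode (n, m)) \<and> pick n m g n = g" if "g \<in> G n m" for n m g
    proof -
      from G(2) that have "\<exists>f. f \<in> A (prod_encode (n, m)) \<and> f n = g" by blast
      thus ?thesis unfolding pick_def by (rule someI_ex)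
    qed
    define F where "F = (\<lambda>k::nat. case prod_decode k of (n, m) \<Rightarrow> pick n m ` G n m)"
    have FE: "F (prod_encode (n, m)) = pick n m ` G n m" for n m unfolding F_def by simp
    have Fk: "finite (F k) \<and> F k \<subseteq> A k" for k
    proof -
      obtain n m where "prod_decode k = (n, m)" by (cases "prod_decode k") blast
      hence k: "k = prod_encode (n, m)" by (metis prod_decode_inverse)
      have "finite (F k)" unfolding k FE using G(1) by simp
      moreover have "F k \<subseteq> A k" unfolding k FE using pick by blast
      ultimately show ?thesis by blast
    qed
    have "is_sup C L (\<Union>k. F k) T"
      unfolding is_sup_def
    proof (intro conjI ballI impI)
      show "T \<in> C" by fact
      fix f assume "f \<in> (\<Union>k. F k)"
      then obtain k where "f \<in> F k" by blast
      hence "f \<in> A k" using Fk by blast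
      hence "f \<in> C" using AC by blast
      thus "L f T" using Ttop by blast
    next
      fix u assume u: "u \<in> C" and ub: "\<forall>a\<in>(\<Union>k. F k). L a u"
      have "le n (T n) (u n)" for n
      proof -
        have un: "u n \<in> P n" using u unfolding C_def prod_carrier_def by simp
        have "\<forall>g\<in>(\<Union>m. G n m). le n g (u n)"
        proof
          fix g assume "g \<in> (\<Union>m. G n m)"
          then obtain m where g: "g \<in> G n m" by blast
          have "pick n m g \<in> F (prod_encode (n, m))" unfolding FE using g by blast
          hence "L (pick n m g) u" using ub by blast
          hence "le n (pick n m g n) (u n)" unfolding L_def prod_le_def by blast
          thus "le n g (u n)" using pick[OF g] by simp
        qed
        thus ?thesis using G(3)[of n] un unfolding is_sup_def by blast
      qed
      thus "L T u" unfolding L_def prod_le_def by blast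
    qed
    thus "\<exists>F. (\<forall>n. finite (F n) \<and> F n \<subseteq> A n) \<and> is_sup C L (\<Union>n. F n) T"
      using Fk by blast
  qed
  have "pre_Pawlikowski C L" unfolding pre_Pawlikowski_def using blC epC by blast
  thus ?thesis using sfin unfolding C_def L_def T_def by blast
qed

end
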